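(* Let $F$ be a special multifield and $F^\bullet=F\setminus\{0\}$. Define a relation on $F^\bullet\times F^\bullet$ by $\langle a,b\rangle\equiv\langle c,d\rangle$ iff $ab=cd$ and $a\in c+d$. Then $(F^\bullet,\equiv,-1)$ is a special group.
   Context: A multiring is a tuple $(R,+,\cdot,-,0,1)$ with $+:R\times R\to\mathcal P(R)\setminus\{\emptyset\}$ satisfying: $z\in x+y\Rightarrow x\in z+(-y)$ and $y\in(-x)+z$; $y\in0+x\iff y=x$; $(x+y)+z=x+(y+z)$ (with $Z+w=\bigcup_{z\in Z}(z+w)$); $x+y=y+x$; $(R,\cdot,1)$ a commutative monoid; $a0=0$; $c\in a+b\Rightarrow cd\in ad+bd$. A multifield is a multiring with every nonzero element invertible. A special multifield is a multifield $F$ such that, with $F^\bullet=F\setminus\{0\}$: (i) $a^2=1$ for all $a\in F^\bullet$; (ii) $a+(-a)=F$ for all $a\in F^\bullet$; (iii) for $a,b,c,d\in F^\bullet$, $ab=cd$ and $a\in c+d$ imply $c\in a+b$; (iv) for $a,\dots,f\in F^\bullet$, $ab=cd=ef$, $a\in c+d$, $c\in e+f$ imply $a\in e+f$; (v) for $a,b,c,d\in F^\bullet$, if there are $x,y,z\in F^\bullet$ with $ax=cy$, $a=xz$, $c=yz$, $a\in c+y$, $b\in x+z$, $d\in y+z$, then there are $t,v,w\in F^\bullet$ with $bt=cv$, $b=tw$, $c=vw$, $b\in c+v$, $a\in t+w$, $d\in v+w$. A special group is a tuple $(G,-1,\equiv)$ where $G$ is a group with $g^2=1$ for all $g$, $-1\in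 G$, and $\equiv$ a relation on $G\times G$ such that: (SG0) $\equiv$ is an equivalence relation; (SG1) $\langle a,b\rangle\equiv\langle b,a\rangle$; (SG2) $\langle a,-a\rangle\equiv\langle1,-1\rangle$ with $-a=(-1)a$; (SG3) $\langle a,b\rangle\equiv\langle c,d\rangle\Rightarrow ab=cd$; (SG4) $\langle a,b\rangle\equiv\langle c,d\rangle\Rightarrow\langle a,-c\rangle\equiv\langle -b,d\rangle$; (SG5) $\langle a,b\rangle\equiv\langle c,d\rangle\Rightarrow\langle ga,gb\rangle\equiv\langle gc,gd\rangle$; (SG6) the relation on $G^3$ given by $\langle a_1,a_2,a_3\rangle\equiv\langle b_1,b_2,b_3\rangle$ iff $\exists x,y,z$ with $\langle a_1,x\rangle\equiv\langle b_1,y\rangle$, $\langle a_2,a_3\rangle\equiv\langle x,z\rangle$, $\langle b_2,b_3\rangle\equiv\langle y,z\rangle$ is transitive. *)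

theory Defs
  imports "HOL-Algebra.Group"
begin

definition set_add :: "('a \<Rightarrow> 'a \<Rightarrow> 'a set) \<Rightarrow> 'a set \<Rightarrow> 'a \<Rightarrow> 'a set" where
  "set_add add Z w = (\<Union>z\<in>Z. add z w)"

definition multiring ::
  "'a set \<Rightarrow> ('a \<Rightarrow> 'a \<Rightarrow> 'a set) \<Rightarrow> ('a \<Rightarrow> 'a \<Rightarrow> 'a) \<Rightarrow> ('a \<Rightarrow> 'a) \<Rightarrow> 'a \<Rightarrow> 'a \<Rightarrow> bool" where
  "multiring R add mul neg zero un \<longleftrightarrow>
     zero \<in> R \<and> un \<in> R \<and>
     (\<forall>x\<in>R. neg x \<in> R) \<and>
     (\<forall>x\<in>R. \<forall>y\<in>R. mul x y \<in> R) \<and>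
     (\<forall>x\<in>R. \<forall>y\<in>R. add x y \<subseteq> R \<and> add x y \<noteq> {}) \<and>
     (\<forall>x\<in>R. \<forall>y\<in>R. \<forall>z\<in>R. z \<in> add x y \<longrightarrow>
         x \<in> add z (neg y) \<and> y \<in> add (neg x) z) \<and>
     (\<forall>x\<in>R. \<forall>y\<in>R. y \<in> add zero x \<longleftrightarrow> y = x) \<and>
     (\<forall>x\<in>R. \<forall>y\<in>R. \<forall>z\<in>R. set_add add (add x y) z = (\<Union>u\<in>add y z. add x u)) \<and>
     (\<forall>x\<in>R. \<forall>y\<in>R. add x y = add y x) \<and>
     (\<forall>x\<in>R. \<forall>y\<in>R. \<forall>z\<in>R. mul (mul x y) z = mul x (mul y z)) \<and>
     (\<forall>x\<in>R. \<forall>y\<in>R. mul x y = mul y x) \<and>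
     (\<forall>x\<in>R. mul un x = x) \<and>
     (\<forall>a\<in>R. mul a zero = zero) \<and>
     (\<forall>a\<in>R. \<forall>b\<in>R. \<forall>c\<in>R. \<forall>d\<in>R. c \<in> add a b \<longrightarrow> mul c d \<in> add (mul a d) (mul b d))"

definition multifield ::
  "'a set \<Rightarrow> ('a \<Rightarrow> 'a \<Rightarrow> 'a set) \<Rightarrow> ('a \<Rightarrow> 'a \<Rightarrow> 'a) \<Rightarrow> ('a \<Rightarrow> 'a) \<Rightarrow> 'a \<Rightarrow> 'a \<Rightarrow> bool" where
  "multifield R add mul neg zero un \<longleftrightarrow>
     multiring R add mul neg zero un \<and> zero \<noteq> un \<and>
     (\<forall>a\<in>R - {zero}. \<exists>b\<in>R. mul a b = un)"

definition special_multifield ::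
  "'a set \<Rightarrow> ('a \<Rightarrow> 'a \<Rightarrow> 'a set) \<Rightarrow> ('a \<Rightarrow> 'a \<Rightarrow> 'a) \<Rightarrow> ('a \<Rightarrow> 'a) \<Rightarrow> 'a \<Rightarrow> 'a \<Rightarrow> bool" where
  "special_multifield F add mul neg zero un \<longleftrightarrow>
     multifield F add mul neg zero un \<and>
     (let Fb = F - {zero} in
       (\<forall>a\<in>Fb. mul a a = un) \<and>
       (\<forall>a\<in>Fb. add a (neg a) = F) \<and>
       (\<forall>a\<in>Fb. \<forall>b\<in>Fb. \<forall>c\<in>Fb. \<forall>d\<in>Fb.
          mul a b = mul c d \<and> a \<in> add c d \<longrightarrow> c \<in> add a b) \<and>
       (\<forall>a\<in>Fb. \<forall>b\<in>Fb. \<forall>c\<in>Fb. \<forall>d\<in>Fb. \<forall>e\<in>Fb. \<forall>f\<in>Fb.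
          mul a b = mul c d \<and> mul c d = mul e f \<and> a \<in> add c d \<and> c \<in> add e f
          \<longrightarrow> a \<in> add e f) \<and>
       (\<forall>a\<in>Fb. \<forall>b\<in>Fb. \<forall>c\<in>Fb. \<forall>d\<in>Fb.
          (\<exists>x\<in>Fb. \<exists>y\<in>Fb. \<exists>z\<in>Fb. mul a x = mul c y \<and> a = mul x z \<and> c = mul y z \<and>
               a \<in> add c y \<and> b \<in> add x z \<and> d \<in> add y z)
          \<longrightarrow> (\<exists>t\<in>Fb. \<exists>v\<in>Fb. \<exists>w\<in>Fb. mul b t = mul c v \<and> b = mul t w \<and> c = mul v w \<and>
               b \<in> add c v \<and> a \<in> add t w \<and> d \<in> add v w)))"

text \<open>Special group (G, -1, equiv), with group operation m and unit e; the relation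
  eqv is on G x G, written eqv (a,b) (c,d) for <a,b> == <c,d>.\<close>
definition sg_eq3 :: "'a set \<Rightarrow> ('a \<times> 'a \<Rightarrow> 'a \<times> 'a \<Rightarrow> bool) \<Rightarrow> 'a \<times> 'a \<times> 'a \<Rightarrow> 'a \<times> 'a \<times> 'a \<Rightarrow> bool" where
  "sg_eq3 G eqv = (\<lambda>(a1,a2,a3) (b1,b2,b3).
     \<exists>x\<in>G. \<exists>y\<in>G. \<exists>z\<in>G. eqv (a1,x) (b1,y) \<and> eqv (a2,a3) (x,z) \<and> eqv (b2,b3) (y,z))"

definition special_group ::
  "'a set \<Rightarrow> ('a \<Rightarrow> 'a \<Rightarrow> 'a) \<Rightarrow> 'a \<Rightarrow> 'a \<Rightarrow> ('a \<times> 'a \<Rightarrow> 'a \<times> 'a \<Rightarrow> bool) \<Rightarrow> bool" where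
  "special_group G m e mone eqv \<longleftrightarrow>
     group \<lparr>carrier = G, mult = m, one = e\<rparr> \<and>
     (\<forall>g\<in>G. m g g = e) \<and>
     mone \<in> G \<and>
     (\<forall>p q. eqv p q \<longrightarrow> p \<in> G \<times> G \<and> q \<in> G \<times> G) \<and>
     \<comment> \<open>SG0\<close>
     (\<forall>p\<in>G \<times> G. eqv p p) \<and>
     (\<forall>p\<in>G \<times> G. \<forall>q\<in>G \<times> G. eqv p q \<longrightarrow> eqv q p) \<and>
     (\<forall>p\<in>G \<times> G. \<forall>q\<in>G \<times> G. \<forall>r\<in>G \<times> G. eqv p q \<and> eqv q r \<longrightarrow> eqv p r) \<and>
     \<comment> \<open>SG1\<close>
     (\<forall>a\<in>G. \<forall>b\<in>G. eqv (a,b) (b,a)) \<and>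
     \<comment> \<open>SG2\<close>
     (\<forall>a\<in>G. eqv (a, m mone a) (e, mone)) \<and>
     \<comment> \<open>SG3\<close>
     (\<forall>a\<in>G. \<forall>b\<in>G. \<forall>c\<in>G. \<forall>d\<in>G. eqv (a,b) (c,d) \<longrightarrow> m a b = m c d) \<and>
     \<comment> \<open>SG4\<close>
     (\<forall>a\<in>G. \<forall>b\<in>G. \<forall>c\<in>G. \<forall>d\<in>G. eqv (a,b) (c,d) \<longrightarrow> eqv (a, m mone c) (m mone b, d)) \<and>
     \<comment> \<open>SG5\<close>
     (\<forall>a\<in>G. \<forall>b\<in>G. \<forall>c\<in>G. \<forall>d\<in>G. \<forall>g\<in>G. eqv (a,b) (c,d) \<longrightarrow> eqv (m g a, m g b) (m g c, m g d)) \<and>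
     \<comment> \<open>SG6\<close>
     (\<forall>p\<in>G \<times> G \<times> G. \<forall>q\<in>G \<times> G \<times> G. \<forall>r\<in>G \<times> G \<times> G.
        sg_eq3 G eqv p q \<and> sg_eq3 G eqv q r \<longrightarrow> sg_eq3 G eqv p r)"

end

theory Submission
  imports Defs
begin

locale smf =
  fixes F add mul neg zero un
  assumes smf: "special_multifield F add mul neg zero un"
begin

lemma MR: "multiring F add mul neg zero un" and zun: "zero \<noteq> un"
  using smf unfolding special_multifield_def multifield_def by auto
lemmas MRc = MR[unfolded multiring_def]
lemmas SMc = smf[unfolded special_multifield_def Let_def]
lemmas MRs = MRc[THEN conjunct1] MRc[THEN conjunct2, THEN conjunct1] MRc[THEN conjunct2, THEN conjunct2, THEN conjunct1] MRc[THEN conjunct2, THEN conjunct2, THEN conjunct2, THEN conjunct1] MRc[THEN conjunct2, THEN conjunct2, THEN conjunct2, THEN conjunct2, THEN conjunct1] MRc[THEN conjunct2, THEN conjunct2, THEN conjunct2, THEN conjunct2, THEN conjunct2, THEN conjunct1] MRc[THEN conjunct2, THEN conjunct2, THEN conjunct2, THEN conjunct2, THEN conjunct2, THEN conjunct2, THEN conjunct1] MRc[THEN conjunct2, THEN conjunct2, THEN conjunct2, THEN conjunct2, THEN conjunct2, THEN conjunct2, THEN conjunct2, THEN conjunct1] MRc[THEN conjunct2, THEN conjunct2, THEN conjunct2, THEN conjunct2, THEN conjunct2, THEN conjunct2, THEN conjunct2, THEN conjunct2, THEN conjunct1] MRc[THEN conjunct2, THEN conjunct2, THEN conjunct2, THEN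 conjunct2, THEN conjunct2, THEN conjunct2, THEN conjunct2, THEN conjunct2, THEN conjunct2, THEN conjunct1] MRc[THEN conjunct2, THEN conjunct2, THEN conjunct2, THEN conjunct2, THEN conjunct2, THEN conjunct2, THEN conjunct2, THEN conjunct2, THEN conjunct2, THEN conjunct2, THEN conjunct1] MRc[THEN conjunct2, THEN conjunct2, THEN conjunct2, THEN conjunct2, THEN conjunct2, THEN conjunct2, THEN conjunct2, THEN conjunct2, THEN conjunct2, THEN conjunct2, THEN conjunct2, THEN conjunct1] MRc[THEN conjunct2, THEN conjunct2, THEN conjunct2, THEN conjunct2, THEN conjunct2, THEN conjunct2, THEN conjunct2, THEN conjunct2, THEN conjunct2, THEN conjunct2, THEN conjunct2, THEN conjunct2, THEN conjunct1] MRc[THEN conjunct2, THEN conjunct2, THEN conjunct2, THEN conjunct2, THEN conjunct2, THEN conjunct2, THEN conjunct2, THEN conjunct2, THEN conjunct2, THEN conjunct2, THEN conjunct2, THEN conjunct2, THEN conjunct2]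
lemmas SMs = SMc[THEN conjunct1] SMc[THEN conjunct2, THEN conjunct1] SMc[THEN conjunct2, THEN conjunct2, THEN conjunct1] SMc[THEN conjunct2, THEN conjunct2, THEN conjunct2, THEN conjunct1] SMc[THEN conjunct2, THEN conjunct2, THEN conjunct2, THEN conjunct2, THEN conjunct1] SMc[THEN conjunct2, THEN conjunct2, THEN conjunct2, THEN conjunct2, THEN conjunct2]

lemma zero_in[simp]: "zero \<in> F" using MRs(1) by blast
lemma un_in[simp]: "un \<in> F" using MRs(2) by blast
lemma neg_in[simp]: "x \<in> F \<Longrightarrow> neg x \<in> F" using MRs(3) by blast
lemma mul_in[simp]: "x \<in> F \<Longrightarrow> y \<in> F \<Longrightarrow> mul x y \<in> F" using MRs(4) by blast
lemma rev1: "x \<in> F \<Longrightarrow> y \<in> F \<Longrightarrow> z \<in> F \<Longrightarrow> z \<in> add x y \<Longrightarrow> x \<in> add z (neg y)"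
  using MRs(6) by blast
lemma rev2: "x \<in> F \<Longrightarrow> y \<in> F \<Longrightarrow> z \<in> F \<Longrightarrow> z \<in> add x y \<Longrightarrow> y \<in> add (neg x) z"
  using MRs(6) by blast
lemma zero_add: "x \<in> F \<Longrightarrow> y \<in> F \<Longrightarrow> y \<in> add zero x \<longleftrightarrow> y = x"
proof -
  have "\<forall>x\<in>F. \<forall>y\<in>F. (y \<in> add zero x) = (y = x)" by (rule MRs(7))
  thus "x \<in> F \<Longrightarrow> y \<in> F \<Longrightarrow> y \<in> add zero x \<longleftrightarrow> y = x" by blast
qed
lemma add_comm: "x \<in> F \<Longrightarrow> y \<in> F \<Longrightarrow> add x y = add y x"
  using MRs(9) by blast
lemma mul_assoc: "x \<in> F \<Longrightarrow> y \<in> F \<Longrightarrow> z \<in> F \<Longrightarrow> mul (mul x y) z = mul x (mul y z)"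
  using MRs(10) by blast
lemma mul_comm: "x \<in> F \<Longrightarrow> y \<in> F \<Longrightarrow> mul x y = mul y x"
  using MRs(11) by blast
lemma mul_lcomm: "x \<in> F \<Longrightarrow> y \<in> F \<Longrightarrow> z \<in> F \<Longrightarrow> mul x (mul y z) = mul y (mul x z)"
  by (metis mul_assoc mul_comm)
lemma un_mul[simp]: "x \<in> F \<Longrightarrow> mul un x = x" using MRs(12) by blast
lemma mul_un[simp]: "x \<in> F \<Longrightarrow> mul x un = x" by (metis un_mul mul_comm un_in)
lemma mul_zero[simp]: "x \<in> F \<Longrightarrow> mul x zero = zero" using MRs(13) by blast
lemma zero_mul[simp]: "x \<in> F \<Longrightarrow> mul zero x = zero" by (metis mul_zero mul_comm zero_in)
lemma distrib: "a \<in> F \<Longrightarrow> b \<in> F \<Longrightarrow> c \<in> F \<Longrightarrow> d \<in> F \<Longrightarrow> c \<in> add a b \<Longrightarrow>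
   mul c d \<in> add (mul a d) (mul b d)"
  using MRs(14) by blast

lemma sq[simp]: "a \<in> F \<Longrightarrow> a \<noteq> zero \<Longrightarrow> mul a a = un"
  using SMs(2) by blast
lemma sq_cancel[simp]: "a \<in> F \<Longrightarrow> a \<noteq> zero \<Longrightarrow> b \<in> F \<Longrightarrow> mul a (mul a b) = b"
  by (metis sq mul_assoc un_mul)
lemma S2: "a \<in> F \<Longrightarrow> a \<noteq> zero \<Longrightarrow> add a (neg a) = F"
  using SMs(3) by blast
lemma S3: "a \<in> F - {zero} \<Longrightarrow> b \<in> F - {zero} \<Longrightarrow> c \<in> F - {zero} \<Longrightarrow> d \<in> F - {zero} \<Longrightarrow>
   mul a b = mul c d \<Longrightarrow> a \<in> add c d \<Longrightarrow> c \<in> add a b"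
  using SMs(4) by blast
lemma S4: "a \<in> F - {zero} \<Longrightarrow> b \<in> F - {zero} \<Longrightarrow> c \<in> F - {zero} \<Longrightarrow> d \<in> F - {zero} \<Longrightarrow>
   e \<in> F - {zero} \<Longrightarrow> f \<in> F - {zero} \<Longrightarrow>
   mul a b = mul c d \<Longrightarrow> mul c d = mul e f \<Longrightarrow> a \<in> add c d \<Longrightarrow> c \<in> add e f \<Longrightarrow> a \<in> add e f"
  using SMs(5) by blast
lemma S5: "a \<in> F - {zero} \<Longrightarrow> b \<in> F - {zero} \<Longrightarrow> c \<in> F - {zero} \<Longrightarrow> d \<in> F - {zero} \<Longrightarrow>
   x \<in> F - {zero} \<Longrightarrow> y \<in> F - {zero} \<Longrightarrow> z \<in> F - {zero} \<Longrightarrow>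
   mul a x = mul c y \<Longrightarrow> a = mul x z \<Longrightarrow> c = mul y z \<Longrightarrow>
   a \<in> add c y \<Longrightarrow> b \<in> add x z \<Longrightarrow> d \<in> add y z \<Longrightarrow>
   \<exists>t\<in>F - {zero}. \<exists>v\<in>F - {zero}. \<exists>w\<in>F - {zero}. mul b t = mul c v \<and> b = mul t w \<and> c = mul v w \<and>
               b \<in> add c v \<and> a \<in> add t w \<and> d \<in> add v w"
proof -
  assume as: "a \<in> F - {zero}" "b \<in> F - {zero}" "c \<in> F - {zero}" "d \<in> F - {zero}"
   "x \<in> F - {zero}" "y \<in> F - {zero}" "z \<in> F - {zero}"
   "mul a x = mul c y" "a = mul x z" "c = mul y z"
   "a \<in> add c y" "b \<in> add x z" "d \<in> add y z"
  have H: "\<forall>a\<in>F - {zero}. \<forall>b\<in>F - {zero}. \<forall>c\<in>F - {zero}. \<forall>d\<in>F - {zero}.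
          (\<exists>x\<in>F - {zero}. \<exists>y\<in>F - {zero}. \<exists>z\<in>F - {zero}. mul a x = mul c y \<and> a = mul x z \<and> c = mul y z \<and>
               a \<in> add c y \<and> b \<in> add x z \<and> d \<in> add y z)
          \<longrightarrow> (\<exists>t\<in>F - {zero}. \<exists>v\<in>F - {zero}. \<exists>w\<in>F - {zero}. mul b t = mul c v \<and> b = mul t w \<and> c = mul v w \<and>
               b \<in> add c v \<and> a \<in> add t w \<and> d \<in> add v w)"
    using SMs(6) by blast
  show ?thesis using H as by blast
qed

lemmas mac = mul_assoc mul_comm mul_lcomm

lemma neg_zero: "neg zero = zero"
proof -
  have "zero \<in> add zero zero" by (simp add: zero_add)
  hence "zero \<in> add zero (neg zero)" using rev1[of zero zero zero] by simp
  thus ?thesis using zero_add[of "neg zero" zero] by simp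
qed

lemma zero_in_neg: "x \<in> F \<Longrightarrow> zero \<in> add x (neg x)"
proof -
  assume x: "x \<in> F"
  have "x \<in> add zero x" using x by (simp add: zero_add)
  thus ?thesis using rev1[of zero x x] x by simp
qed

lemma neg_neg: "x \<in> F \<Longrightarrow> neg (neg x) = x"
proof -
  assume x: "x \<in> F"
  have "x \<in> add zero (neg (neg x))" using rev1[of x "neg x" zero] x zero_in_neg by simp
  thus ?thesis using zero_add[of "neg (neg x)" x] x by simp
qed

lemma neg_mul: "d \<in> F \<Longrightarrow> neg d = mul (neg un) d"
proof -
  assume d: "d \<in> F"
  have "mul zero d \<in> add (mul un d) (mul (neg un) d)"
    using distrib[of un "neg un" zero d] d zero_in_neg[of un] by simp
  hence "zero \<in> add d (mul (neg un) d)" using d by simp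
  hence "d \<in> add zero (neg (mul (neg un) d))" using rev1[of d "mul (neg un) d" zero] d by simp
  hence "d = neg (mul (neg un) d)" using zero_add d by simp
  hence "neg d = neg (neg (mul (neg un) d))" by (rule arg_cong)
  also have "\<dots> = mul (neg un) d" using d by (simp add: neg_neg)
  finally show ?thesis .
qed

lemma mul_nz: "a \<in> F \<Longrightarrow> a \<noteq> zero \<Longrightarrow> b \<in> F \<Longrightarrow> b \<noteq> zero \<Longrightarrow> mul a b \<noteq> zero"
  by (metis sq_cancel mul_zero)

lemma un_nz: "un \<noteq> zero" using zun by auto

lemma negun_nz: "neg un \<noteq> zero"
  by (metis neg_neg neg_zero un_in un_nz)

lemma self_add: "a \<in> F \<Longrightarrow> a \<noteq> zero \<Longrightarrow> b \<in> F \<Longrightarrow> b \<noteq> zero \<Longrightarrow> a \<in> add a b"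
proof -
  assume a: "a \<in> F" "a \<noteq> zero" and b: "b \<in> F" "b \<noteq> zero"
  define t where "t = mul a b"
  have t: "t \<in> F" "t \<noteq> zero" using a b mul_nz t_def by auto
  have "un \<in> add t (neg t)" using S2 t by simp
  hence "t \<in> add un (neg (neg t))" using rev1[of t "neg t" un] t by simp
  hence "t \<in> add un t" using neg_neg t by simp
  hence "mul t b \<in> add (mul un b) (mul t b)" using distrib[of un t t b] t b by simp
  moreover have "mul t b = a" unfolding t_def using a b by (simp add: mac)
  ultimately have "a \<in> add b a" using b by simp
  thus ?thesis using add_comm a b by simp
qed

definition E where
  "E a b c d \<longleftrightarrow> a \<in> F - {zero} \<and> b \<in> F - {zero} \<and> c \<in> F - {zero} \<and> d \<in> F - {zero} \<and>
                   mul a b = mul c d \<and> a \<in> add c d"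

lemma E_refl: "a \<in> F - {zero} \<Longrightarrow> b \<in> F - {zero} \<Longrightarrow> E a b a b"
  unfolding E_def by (simp add: self_add)

lemma E_sym: assumes "E a b c d" shows "E c d a b"
proof -
  from assms have h: "a \<in> F - {zero}" "b \<in> F - {zero}" "c \<in> F - {zero}" "d \<in> F - {zero}"
    "mul a b = mul c d" "a \<in> add c d" unfolding E_def by auto
  have "c \<in> add a b" by (rule S3[OF h])
  thus ?thesis unfolding E_def using h by simp
qed

lemma E_trans: assumes "E a b c d" "E c d e f" shows "E a b e f"
proof -
  from assms have h: "a \<in> F - {zero}" "b \<in> F - {zero}" "c \<in> F - {zero}" "d \<in> F - {zero}"
    "e \<in> F - {zero}" "f \<in> F - {zero}"
    "mul a b = mul c d" "mul c d = mul e f" "a \<in> add c d" "c \<in> add e f" unfolding E_def by auto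
  have "a \<in> add e f" by (rule S4[OF h])
  thus ?thesis unfolding E_def using h by simp
qed

lemma E_comm: "a \<in> F - {zero} \<Longrightarrow> b \<in> F - {zero} \<Longrightarrow> E a b b a"
  unfolding E_def by (simp add: self_add add_comm[of b a] mul_comm[of a b])

lemma E_swapL: assumes "E a b c d" shows "E b a c d"
proof -
  have "a \<in> F - {zero}" "b \<in> F - {zero}" using assms unfolding E_def by auto
  hence "E b a a b" by (intro E_comm)
  thus ?thesis by (rule E_trans[OF _ assms])
qed

lemma E_swapR: assumes "E a b c d" shows "E a b d c"
proof -
  from assms have h: "a \<in> F - {zero}" "b \<in> F - {zero}" "c \<in> F - {zero}" "d \<in> F - {zero}"
    "mul a b = mul c d" "a \<in> add c d" unfolding E_def by auto
  have "mul d c = mul c d" "add d c = add c d" using h by (simp_all add: mul_comm add_comm)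
  thus ?thesis unfolding E_def using h by simp
qed

lemma E_scale: "g \<in> F - {zero} \<Longrightarrow> E a b c d \<Longrightarrow> E (mul g a) (mul g b) (mul g c) (mul g d)"
proof -
  assume g: "g \<in> F - {zero}" and e: "E a b c d"
  hence m: "a \<in> F" "a \<noteq> zero" "b \<in> F" "b \<noteq> zero" "c \<in> F" "c \<noteq> zero" "d \<in> F" "d \<noteq> zero"
     "mul a b = mul c d" "a \<in> add c d" unfolding E_def by auto
  have "mul a g \<in> add (mul c g) (mul d g)" using distrib[of c d a g] m g by simp
  hence "mul g a \<in> add (mul g c) (mul g d)" using mul_comm m g by simp
  moreover have "mul (mul g a) (mul g b) = mul (mul g c) (mul g d)"
  proof -
    have "mul (mul g a) (mul g b) = mul a b" using m g by (simp add: mac)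
    also have "\<dots> = mul c d" using m by simp
    also have "\<dots> = mul (mul g c) (mul g d)" using m g by (simp add: mac)
    finally show ?thesis .
  qed
  ultimately show ?thesis unfolding E_def using m g mul_nz by auto
qed

lemma E_SG4: "E a b c d \<Longrightarrow> E a (mul (neg un) c) (mul (neg un) b) d"
proof -
  assume e: "E a b c d"
  hence m: "a \<in> F" "a \<noteq> zero" "b \<in> F" "b \<noteq> zero" "c \<in> F" "c \<noteq> zero" "d \<in> F" "d \<noteq> zero"
     and eq: "mul a b = mul c d" and ad: "a \<in> add c d" unfolding E_def by auto
  have n: "neg un \<in> F" "neg un \<noteq> zero" using negun_nz by auto
  have ac: "mul a c = mul d b"
  proof -
    have "mul a c = mul (mul a b) (mul b c)" using m by (simp add: mac)
    also have "\<dots> = mul (mul c d) (mul b c)" using eq by simp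
    also have "\<dots> = mul d b" using m by (simp add: mac)
    finally show ?thesis .
  qed
  have "d \<in> add (neg c) a" using rev2[of c d a] m ad by simp
  hence "mul d (mul a d) \<in> add (mul (neg c) (mul a d)) (mul a (mul a d))"
    using distrib[of "neg c" a d "mul a d"] m by simp
  moreover have "mul d (mul a d) = a" using m by (simp add: mac)
  moreover have "mul a (mul a d) = d" using m by simp
  moreover have "mul (neg c) (mul a d) = mul (neg un) b"
  proof -
    have "mul (neg c) (mul a d) = mul (neg un) (mul (mul a c) d)"
      using m n by (simp add: neg_mul[of c] mac)
    also have "\<dots> = mul (neg un) (mul (mul d b) d)" using ac by simp
    also have "\<dots> = mul (neg un) b" using m n by (simp add: mac)
    finally show ?thesis .
  qed
  ultimately have "a \<in> add (mul (neg un) b) d" by simp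
  moreover have "mul a (mul (neg un) c) = mul (mul (neg un) b) d"
  proof -
    have "mul a (mul (neg un) c) = mul (neg un) (mul a c)" using m n by (simp add: mac)
    also have "\<dots> = mul (neg un) (mul d b)" by (simp only: ac)
    also have "\<dots> = mul (mul (neg un) b) d" using m n by (simp add: mac)
    finally show ?thesis .
  qed
  ultimately show ?thesis unfolding E_def using m n mul_nz by auto
qed

lemma E_SG2: "a \<in> F - {zero} \<Longrightarrow> E a (mul (neg un) a) un (neg un)"
  unfolding E_def using negun_nz mul_nz un_nz S2[of un] by (auto simp: mac)

definition T3 where
  "T3 a1 a2 a3 b1 b2 b3 \<longleftrightarrow> (\<exists>x\<in>F - {zero}. \<exists>y\<in>F - {zero}. \<exists>z\<in>F - {zero}.
      E a1 x b1 y \<and> E a2 a3 x z \<and> E b2 b3 y z)"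

lemma T3_sym: "T3 a1 a2 a3 b1 b2 b3 \<Longrightarrow> T3 b1 b2 b3 a1 a2 a3"
proof -
  assume "T3 a1 a2 a3 b1 b2 b3"
  then obtain x y z where w: "x \<in> F - {zero}" "y \<in> F - {zero}" "z \<in> F - {zero}"
    "E a1 x b1 y" "E a2 a3 x z" "E b2 b3 y z" unfolding T3_def by blast
  have "E b1 y a1 x" using w(4) by (rule E_sym)
  thus ?thesis unfolding T3_def using w by blast
qed

lemma T3_sw23L: "T3 a1 a2 a3 b1 b2 b3 \<Longrightarrow> T3 a1 a3 a2 b1 b2 b3"
proof -
  assume "T3 a1 a2 a3 b1 b2 b3"
  then obtain x y z where w: "x \<in> F - {zero}" "y \<in> F - {zero}" "z \<in> F - {zero}"
    "E a1 x b1 y" "E a2 a3 x z" "E b2 b3 y z" unfolding T3_def by blast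
  have "E a3 a2 x z" using w(5) by (rule E_swapL)
  thus ?thesis unfolding T3_def using w by blast
qed

lemma T3_scale: "g \<in> F - {zero} \<Longrightarrow> T3 a1 a2 a3 b1 b2 b3 \<Longrightarrow>
   T3 (mul g a1) (mul g a2) (mul g a3) (mul g b1) (mul g b2) (mul g b3)"
proof -
  assume g: "g \<in> F - {zero}" and "T3 a1 a2 a3 b1 b2 b3"
  then obtain x y z where w: "x \<in> F - {zero}" "y \<in> F - {zero}" "z \<in> F - {zero}"
    "E a1 x b1 y" "E a2 a3 x z" "E b2 b3 y z" unfolding T3_def by blast
  have m: "mul g x \<in> F - {zero}" "mul g y \<in> F - {zero}" "mul g z \<in> F - {zero}"
    using w g mul_nz by auto
  have "E (mul g a1) (mul g x) (mul g b1) (mul g y)" using E_scale[OF g w(4)] .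
  moreover have "E (mul g a2) (mul g a3) (mul g x) (mul g z)" using E_scale[OF g w(5)] .
  moreover have "E (mul g b2) (mul g b3) (mul g y) (mul g z)" using E_scale[OF g w(6)] .
  ultimately show ?thesis unfolding T3_def using m by blast
qed

lemma T3_mem: "T3 a1 a2 a3 b1 b2 b3 \<Longrightarrow> a1 \<in> F \<and> a1 \<noteq> zero \<and> a2 \<in> F \<and> a2 \<noteq> zero \<and>
   a3 \<in> F \<and> a3 \<noteq> zero \<and> b1 \<in> F \<and> b1 \<noteq> zero \<and> b2 \<in> F \<and> b2 \<noteq> zero \<and> b3 \<in> F \<and> b3 \<noteq> zero"
  unfolding T3_def E_def by blast

lemma T3_prod: "T3 a1 a2 a3 b1 b2 b3 \<Longrightarrow> mul a1 (mul a2 a3) = mul b1 (mul b2 b3)"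
proof -
  assume "T3 a1 a2 a3 b1 b2 b3"
  then obtain x y z where xyz: "x \<in> F" "y \<in> F" "z \<in> F" "E a1 x b1 y" "E a2 a3 x z" "E b2 b3 y z"
    unfolding T3_def by blast
  hence e: "mul a1 x = mul b1 y" "mul a2 a3 = mul x z" "mul b2 b3 = mul y z"
    and m: "a1 \<in> F" "b1 \<in> F" unfolding E_def by auto
  have "mul a1 (mul a2 a3) = mul a1 (mul x z)" by (simp only: e(2))
  also have "\<dots> = mul (mul a1 x) z" by (rule mul_assoc[OF m(1) xyz(1) xyz(3), symmetric])
  also have "\<dots> = mul (mul b1 y) z" by (simp only: e(1))
  also have "\<dots> = mul b1 (mul y z)" by (rule mul_assoc[OF m(2) xyz(2) xyz(3)])
  also have "\<dots> = mul b1 (mul b2 b3)" by (simp only: e(3))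
  finally show ?thesis .
qed

lemma T3_core: "T3 a1 a2 a3 b1 b2 b3 \<Longrightarrow> mul a1 (mul a2 a3) = un \<Longrightarrow> T3 a2 a1 a3 b1 b2 b3"
proof -
  assume T: "T3 a1 a2 a3 b1 b2 b3" and h: "mul a1 (mul a2 a3) = un"
  have hb: "mul b1 (mul b2 b3) = un" using T3_prod[OF T] h by simp
  note m = T3_mem[OF T]
  obtain x y z where xyz: "x \<in> F - {zero}" "y \<in> F - {zero}" "z \<in> F - {zero}"
    "E a1 x b1 y" "E a2 a3 x z" "E b2 b3 y z"
    using T unfolding T3_def by blast
  hence e: "mul a1 x = mul b1 y" "a1 \<in> add b1 y" "mul a2 a3 = mul x z" "a2 \<in> add x z"
    "mul b2 b3 = mul y z" "b2 \<in> add y z" unfolding E_def by auto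
  have a1: "mul a2 a3 = a1"
  proof -
    have "mul a2 a3 = mul a1 (mul a1 (mul a2 a3))" using m by simp
    also have "\<dots> = a1" using m by (simp only: h mul_un)
    finally show ?thesis .
  qed
  have b1: "mul b2 b3 = b1"
  proof -
    have "mul b2 b3 = mul b1 (mul b1 (mul b2 b3))" using m by simp
    also have "\<dots> = b1" using m by (simp only: hb mul_un)
    finally show ?thesis .
  qed
  have a2: "mul a1 a3 = a2"
  proof -
    have "mul a1 a3 = mul a2 (mul a1 (mul a2 a3))" using m by (simp add: mac)
    also have "\<dots> = a2" using m by (simp only: h mul_un)
    finally show ?thesis .
  qed
  have ax: "a1 = mul x z" using a1 e(3) by metis
  have bx: "b1 = mul y z" using b1 e(5) by metis
  have mm: "a1 \<in> F - {zero}" "a2 \<in> F - {zero}" "b1 \<in> F - {zero}" "b2 \<in> F - {zero}"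
    using m by auto
  have ex: "\<exists>t\<in>F - {zero}. \<exists>v\<in>F - {zero}. \<exists>w\<in>F - {zero}. mul a2 t = mul b1 v \<and> a2 = mul t w \<and> b1 = mul v w \<and>
               a2 \<in> add b1 v \<and> a1 \<in> add t w \<and> b2 \<in> add v w"
    by (rule S5[OF mm xyz(1-3) e(1) ax bx e(2) e(4) e(6)])
  obtain t v w where tvw: "t \<in> F - {zero}" "v \<in> F - {zero}" "w \<in> F - {zero}"
    "mul a2 t = mul b1 v" "a2 = mul t w" "b1 = mul v w"
    "a2 \<in> add b1 v" "a1 \<in> add t w" "b2 \<in> add v w"
    using ex by blast
  have "E a2 t b1 v" unfolding E_def using tvw mm by simp
  moreover have "E a1 a3 t w" unfolding E_def using tvw m a2 by simp
  moreover have "E b2 b3 v w" unfolding E_def using tvw m b1 by simp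
  ultimately have "E a2 t b1 v" "E a1 a3 t w" "E b2 b3 v w" by auto
  thus ?thesis unfolding T3_def using tvw by blast
qed

lemma T3_sw12L: "T3 a1 a2 a3 b1 b2 b3 \<Longrightarrow> T3 a2 a1 a3 b1 b2 b3"
proof -
  assume T: "T3 a1 a2 a3 b1 b2 b3"
  note m = T3_mem[OF T]
  define p where "p = mul a1 (mul a2 a3)"
  have p: "p \<in> F - {zero}" unfolding p_def using m mul_nz by auto
  have S: "T3 (mul p a1) (mul p a2) (mul p a3) (mul p b1) (mul p b2) (mul p b3)"
    using T3_scale[OF p T] .
  have "mul (mul p a1) (mul (mul p a2) (mul p a3)) = un"
    unfolding p_def using m by (simp add: mac)
  hence S2': "T3 (mul p a2) (mul p a1) (mul p a3) (mul p b1) (mul p b2) (mul p b3)"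
    using T3_core[OF S] by simp
  have "T3 (mul p (mul p a2)) (mul p (mul p a1)) (mul p (mul p a3))
          (mul p (mul p b1)) (mul p (mul p b2)) (mul p (mul p b3))"
    using T3_scale[OF p S2'] .
  thus ?thesis using p m by simp
qed

lemma T3_sw23R: "T3 a1 a2 a3 b1 b2 b3 \<Longrightarrow> T3 a1 a2 a3 b1 b3 b2"
  by (rule T3_sym, rule T3_sw23L, rule T3_sym)
lemma T3_sw12R: "T3 a1 a2 a3 b1 b2 b3 \<Longrightarrow> T3 a1 a2 a3 b2 b1 b3"
  by (rule T3_sym, rule T3_sw12L, rule T3_sym)

lemma T3_sw13: "T3 a1 a2 a3 b1 b2 b3 \<Longrightarrow> T3 a3 a2 a1 b3 b2 b1"
  by (rule T3_sw12R, rule T3_sw23R, rule T3_sw12R, rule T3_sw12L, rule T3_sw23L, rule T3_sw12L)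

lemma T3_T23R: "T3 a1 a2 a3 b1 b2 b3 \<Longrightarrow> E b2 b3 c2 c3 \<Longrightarrow> T3 a1 a2 a3 b1 c2 c3"
proof -
  assume "T3 a1 a2 a3 b1 b2 b3" and e: "E b2 b3 c2 c3"
  then obtain x y z where w: "x \<in> F - {zero}" "y \<in> F - {zero}" "z \<in> F - {zero}"
    "E a1 x b1 y" "E a2 a3 x z" "E b2 b3 y z" unfolding T3_def by blast
  have "E c2 c3 y z" using E_trans[OF E_sym[OF e] w(6)] .
  thus ?thesis unfolding T3_def using w by blast
qed

lemma T3_T12R: "T3 a1 a2 a3 b1 b2 b3 \<Longrightarrow> E b1 b2 c1 c2 \<Longrightarrow> T3 a1 a2 a3 c1 c2 b3"
proof -
  assume T: "T3 a1 a2 a3 b1 b2 b3" and e: "E b1 b2 c1 c2"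
  have "T3 a3 a2 a1 b3 b2 b1" using T3_sw13[OF T] .
  moreover have "E b2 b1 c2 c1" using e E_swapL E_swapR by blast
  ultimately have "T3 a3 a2 a1 b3 c2 c1" by (rule T3_T23R)
  thus ?thesis using T3_sw13 by simp
qed

lemma T3_trans: "T3 a1 a2 a3 b1 b2 b3 \<Longrightarrow> T3 b1 b2 b3 c1 c2 c3 \<Longrightarrow> T3 a1 a2 a3 c1 c2 c3"
proof -
  assume T: "T3 a1 a2 a3 b1 b2 b3" and T': "T3 b1 b2 b3 c1 c2 c3"
  obtain x y z where w: "E b1 x c1 y" "E b2 b3 x z" "E c2 c3 y z"
    using T' unfolding T3_def by blast
  have "T3 a1 a2 a3 b1 x z" using T3_T23R[OF T w(2)] .
  hence "T3 a1 a2 a3 c1 y z" using T3_T12R w(1) by blast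
  thus ?thesis using T3_T23R E_sym[OF w(3)] by blast
qed

end

lemma (in smf) SG:
  "special_group (F - {zero}) mul un (neg un) (\<lambda>p q. E (fst p) (snd p) (fst q) (snd q))"
  unfolding special_group_def
proof (intro conjI)
  show "group \<lparr>carrier = F - {zero}, mult = mul, one = un\<rparr>"
    apply (rule groupI)
        apply (auto simp: mul_nz un_nz mul_assoc)
    apply (rule_tac x=x in bexI)
     apply auto
    done
  show "\<forall>g\<in>F - {zero}. mul g g = un" by simp
  show "neg un \<in> F - {zero}" using negun_nz by simp
  show "\<forall>p q. E (fst p) (snd p) (fst q) (snd q) \<longrightarrow> p \<in> (F - {zero}) \<times> (F - {zero}) \<and> q \<in> (F - {zero}) \<times> (F - {zero})"
    unfolding E_def by (simp add: mem_Times_iff)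
  show "\<forall>p\<in>(F - {zero}) \<times> (F - {zero}). E (fst p) (snd p) (fst p) (snd p)"
    by (intro ballI, rule E_refl) (auto simp: mem_Times_iff)
  show "\<forall>p\<in>(F - {zero}) \<times> (F - {zero}). \<forall>q\<in>(F - {zero}) \<times> (F - {zero}).
      E (fst p) (snd p) (fst q) (snd q) \<longrightarrow> E (fst q) (snd q) (fst p) (snd p)"
    by (intro ballI impI, erule E_sym)
  show "\<forall>p\<in>(F - {zero}) \<times> (F - {zero}). \<forall>q\<in>(F - {zero}) \<times> (F - {zero}). \<forall>r\<in>(F - {zero}) \<times> (F - {zero}).
      E (fst p) (snd p) (fst q) (snd q) \<and> E (fst q) (snd q) (fst r) (snd r) \<longrightarrow> E (fst p) (snd p) (fst r) (snd r)"
    by (intro ballI impI, elim conjE, erule (1) E_trans)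
  show "\<forall>a\<in>F - {zero}. \<forall>b\<in>F - {zero}. E (fst (a, b)) (snd (a, b)) (fst (b, a)) (snd (b, a))"
    by (intro ballI, simp only: fst_conv snd_conv, rule E_comm)
  show "\<forall>a\<in>F - {zero}. E (fst (a, mul (neg un) a)) (snd (a, mul (neg un) a)) (fst (un, neg un)) (snd (un, neg un))"
    by (intro ballI, simp only: fst_conv snd_conv, rule E_SG2)
  show "\<forall>a\<in>F - {zero}. \<forall>b\<in>F - {zero}. \<forall>c\<in>F - {zero}. \<forall>d\<in>F - {zero}.
     E (fst (a, b)) (snd (a, b)) (fst (c, d)) (snd (c, d)) \<longrightarrow> mul a b = mul c d"
    unfolding E_def by simp
  show "\<forall>a\<in>F - {zero}. \<forall>b\<in>F - {zero}. \<forall>c\<in>F - {zero}. \<forall>d\<in>F - {zero}.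
     E (fst (a, b)) (snd (a, b)) (fst (c, d)) (snd (c, d)) \<longrightarrow>
     E (fst (a, mul (neg un) c)) (snd (a, mul (neg un) c)) (fst (mul (neg un) b, d)) (snd (mul (neg un) b, d))"
    by (intro ballI impI, simp only: fst_conv snd_conv, erule E_SG4)
  show "\<forall>a\<in>F - {zero}. \<forall>b\<in>F - {zero}. \<forall>c\<in>F - {zero}. \<forall>d\<in>F - {zero}. \<forall>g\<in>F - {zero}.
     E (fst (a, b)) (snd (a, b)) (fst (c, d)) (snd (c, d)) \<longrightarrow>
     E (fst (mul g a, mul g b)) (snd (mul g a, mul g b)) (fst (mul g c, mul g d)) (snd (mul g c, mul g d))"
    by (intro ballI impI, simp only: fst_conv snd_conv, erule E_scale[rotated])
  have s3: "\<And>a1 a2 a3 b1 b2 b3. sg_eq3 (F - {zero}) (\<lambda>p q. E (fst p) (snd p) (fst q) (snd q))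
      (a1, a2, a3) (b1, b2, b3) = T3 a1 a2 a3 b1 b2 b3"
    unfolding sg_eq3_def T3_def by simp
  show "\<forall>p\<in>(F - {zero}) \<times> (F - {zero}) \<times> (F - {zero}). \<forall>q\<in>(F - {zero}) \<times> (F - {zero}) \<times> (F - {zero}).
       \<forall>r\<in>(F - {zero}) \<times> (F - {zero}) \<times> (F - {zero}).
        sg_eq3 (F - {zero}) (\<lambda>p q. E (fst p) (snd p) (fst q) (snd q)) p q \<and>
        sg_eq3 (F - {zero}) (\<lambda>p q. E (fst p) (snd p) (fst q) (snd q)) q r \<longrightarrow>
        sg_eq3 (F - {zero}) (\<lambda>p q. E (fst p) (snd p) (fst q) (snd q)) p r"
    by (clarify, simp only: s3, erule (1) T3_trans)
qed

theorem theorem5p10: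
  assumes "special_multifield F add mul neg zero un"
  shows "special_group (F - {zero}) mul un (neg un)
           (\<lambda>(a, b) (c, d). a \<in> F - {zero} \<and> b \<in> F - {zero} \<and> c \<in> F - {zero} \<and> d \<in> F - {zero} \<and>
                            mul a b = mul c d \<and> a \<in> add c d)"
proof -
  have S: "smf F add mul neg zero un" using assms unfolding smf_def .
  have SG: "special_group (F - {zero}) mul un (neg un)
     (\<lambda>p q. smf.E F add mul zero (fst p) (snd p) (fst q) (snd q))"
    by (rule smf.SG[OF S])
  have eq: "(\<lambda>(a, b) (c, d). a \<in> F - {zero} \<and> b \<in> F - {zero} \<and> c \<in> F - {zero} \<and> d \<in> F - {zero} \<and>
                            mul a b = mul c d \<and> a \<in> add c d) =
     (\<lambda>p q. smf.E F add mul zero (fst p) (snd p) (fst q) (snd q))"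
    apply (rule ext, rule ext)
    apply (simp only: split_beta smf.E_def[OF S])
    done
  show ?thesis unfolding eq by (rule SG)
qed

end
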